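(* Let $d,k,t\ge 0$ be integers with $t\le d$. Then $2f(k,d)\le f(k,d-t)+f(k,d+t)$.
   Context: For a graph $G=(V,E)$ and an integer $k\ge 0$, a $k$-independent set is a set $S\subseteq V$ such that the induced subgraph $G[S]$ has maximum degree at most $k$; $\alpha_k(G)$ denotes the maximum cardinality of a $k$-independent set of $G$. $n(G)$ is the number of vertices and $d(G)=2|E(G)|/n(G)$ the average degree. For integers $d,k\ge 0$, $f(k,d)=\inf\left\{\frac{\alpha_k(G)}{n(G)} : G \text{ a finite simple graph with at least one vertex and } d(G)\le d\right\}$. *)

theory Defs
  imports Complex_Main
begin

text \<open>Finite simple graphs are represented by a finite vertex set V of naturals
  (every finite graph is isomorphic to one of this form) and a set E of
  2-element subsets of V.\<close>

definition simple_graph :: "nat set \<Rightarrow> nat set set \<Rightarrow> bool" where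
  "simple_graph V E \<longleftrightarrow> finite V \<and>
     (\<forall>e\<in>E. \<exists>u v. e = {u, v} \<and> u \<noteq> v \<and> u \<in> V \<and> v \<in> V)"

definition k_independent :: "nat \<Rightarrow> nat set \<Rightarrow> nat set set \<Rightarrow> nat set \<Rightarrow> bool" where
  "k_independent k V E S \<longleftrightarrow> S \<subseteq> V \<and>
     (\<forall>u\<in>S. card {v\<in>S. {u, v} \<in> E} \<le> k)"

definition alpha_k :: "nat \<Rightarrow> nat set \<Rightarrow> nat set set \<Rightarrow> nat" where
  "alpha_k k V E = Max {card S | S. k_independent k V E S}"

definition avg_degree :: "nat set \<Rightarrow> nat set set \<Rightarrow> real" where
  "avg_degree V E = 2 * real (card E) / real (card V)"

definition f :: "nat \<Rightarrow> nat \<Rightarrow> real" where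
  "f k d = Inf {real (alpha_k k V E) / real (card V) | V E.
                  simple_graph V E \<and> V \<noteq> {} \<and> avg_degree V E \<le> real d}"

end

theory Submission
  imports Defs
begin

lemma finite_E: "simple_graph V E \<Longrightarrow> finite E"
proof -
  assume a: "simple_graph V E"
  hence "E \<subseteq> Pow V" unfolding simple_graph_def by fastforce
  moreover have "finite V" using a unfolding simple_graph_def by blast
  ultimately show ?thesis using finite_subset by auto
qed

lemma alpha_set_finite: "finite V \<Longrightarrow> finite {card S | S. k_independent k V E S}"
proof -
  assume "finite V"
  have "{card S | S. k_independent k V E S} \<subseteq> card ` Pow V"
    unfolding k_independent_def by blast
  thus ?thesis using \<open>finite V\<close> by (rule finite_subset[OF _ finite_imageI[OF finite_Pow_iff[THEN iffD2]]])
qed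

lemma alpha_ge: "finite V \<Longrightarrow> k_independent k V E S \<Longrightarrow> card S \<le> alpha_k k V E"
  unfolding alpha_k_def by (rule Max_ge) (auto intro: alpha_set_finite)

lemma alpha_obtain: "finite V \<Longrightarrow> \<exists>S. k_independent k V E S \<and> card S = alpha_k k V E"
proof -
  assume fin: "finite V"
  have "k_independent k V E {}" unfolding k_independent_def by simp
  hence ne: "{card S | S. k_independent k V E S} \<noteq> {}" by blast
  have "alpha_k k V E \<in> {card S | S. k_independent k V E S}"
    unfolding alpha_k_def by (rule Max_in[OF alpha_set_finite[OF fin] ne])
  thus ?thesis by auto
qed

lemma alpha_le_card: "finite V \<Longrightarrow> alpha_k k V E \<le> card V"
proof -
  assume fin: "finite V"
  obtain S where "k_independent k V E S" "card S = alpha_k k V E" using alpha_obtain[OF fin] by blast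
  thus ?thesis unfolding k_independent_def using card_mono[OF fin] by metis
qed

lemma restrict:
  assumes S: "k_independent k V E S" and fin: "finite V" and inj: "inj_on h V1"
    and hE: "\<forall>e\<in>E1. h ` e \<in> E"
  shows "k_independent k V1 E1 {v\<in>V1. h v \<in> S}"
  unfolding k_independent_def
proof (intro conjI ballI)
  show "{v \<in> V1. h v \<in> S} \<subseteq> V1" by blast
next
  fix u assume u: "u \<in> {v \<in> V1. h v \<in> S}"
  let ?A = "{v \<in> {v \<in> V1. h v \<in> S}. {u, v} \<in> E1}"
  let ?B = "{w\<in>S. {h u, w} \<in> E}"
  have fS: "finite S" using S fin unfolding k_independent_def using finite_subset by blast
  have "card ?A \<le> card ?B"
  proof (rule card_inj_on_le)
    show "inj_on h ?A" using inj by (rule inj_on_subset) blast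
    show "h ` ?A \<subseteq> ?B"
    proof
      fix w assume "w \<in> h ` ?A"
      then obtain v where v: "v \<in> ?A" "w = h v" by blast
      hence "h ` {u,v} \<in> E" using hE by blast
      thus "w \<in> ?B" using v by auto
    qed
    show "finite ?B" using fS by simp
  qed
  also have "\<dots> \<le> k" using S u unfolding k_independent_def by blast
  finally show "card ?A \<le> k" .
qed

lemma union_graph:
  assumes g1: "simple_graph V1 E1" and g2: "simple_graph V2 E2"
  shows "\<exists>V E. simple_graph V E \<and> card V = card V1 + card V2 \<and> card E = card E1 + card E2
     \<and> alpha_k k V E \<le> alpha_k k V1 E1 + alpha_k k V2 E2"
proof -
  define h1 :: "nat \<Rightarrow> nat" where "h1 = (\<lambda>v. 2*v)"
  define h2 :: "nat \<Rightarrow> nat" where "h2 = (\<lambda>v. 2*v+1)"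
  have i1: "inj h1" unfolding h1_def by (auto simp: inj_def)
  have i2: "inj h2" unfolding h2_def by (auto simp: inj_def)
  have dis: "h1 x \<noteq> h2 y" for x y unfolding h1_def h2_def by presburger
  define V where "V = h1 ` V1 \<union> h2 ` V2"
  define E where "E = (\<lambda>e. h1 ` e) ` E1 \<union> (\<lambda>e. h2 ` e) ` E2"
  have f1: "finite V1" and f2: "finite V2" using g1 g2 unfolding simple_graph_def by auto
  have fV: "finite V" unfolding V_def using f1 f2 by simp
  have sg: "simple_graph V E"
    unfolding simple_graph_def
  proof (intro conjI ballI)
    show "finite V" by (rule fV)
  next
    fix e assume "e \<in> E"
    then consider (a) e' where "e' \<in> E1" "e = h1 ` e'" | (b) e' where "e' \<in> E2" "e = h2 ` e'"
      unfolding E_def by blast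
    thus "\<exists>u v. e = {u, v} \<and> u \<noteq> v \<and> u \<in> V \<and> v \<in> V"
    proof cases
      case a
      then obtain u v where "e' = {u,v}" "u \<noteq> v" "u \<in> V1" "v \<in> V1"
        using g1 unfolding simple_graph_def by blast
      thus ?thesis using a i1 unfolding V_def
        by (intro exI[of _ "h1 u"] exI[of _ "h1 v"]) (auto simp: inj_eq)
    next
      case b
      then obtain u v where "e' = {u,v}" "u \<noteq> v" "u \<in> V2" "v \<in> V2"
        using g2 unfolding simple_graph_def by blast
      thus ?thesis using b i2 unfolding V_def
        by (intro exI[of _ "h2 u"] exI[of _ "h2 v"]) (auto simp: inj_eq)
    qed
  qed
  have cV: "card V = card V1 + card V2"
  proof -
    have "h1 ` V1 \<inter> h2 ` V2 = {}" using dis by blast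
    hence "card V = card (h1 ` V1) + card (h2 ` V2)" unfolding V_def
      using f1 f2 by (simp add: card_Un_disjoint)
    thus ?thesis using i1 i2 by (simp add: card_image inj_on_subset[of _ UNIV])
  qed
  have cE: "card E = card E1 + card E2"
  proof -
    have fe1: "finite E1" and fe2: "finite E2" using g1 g2 by (auto intro: finite_E)
    have "(\<lambda>e. h1 ` e) ` E1 \<inter> (\<lambda>e. h2 ` e) ` E2 = {}"
    proof (rule ccontr)
      assume "\<not> ?thesis"
      then obtain e1 e2 where "e1 \<in> E1" "e2 \<in> E2" "h1 ` e1 = h2 ` e2" by blast
      moreover obtain u v where "e1 = {u,v}" using g1 \<open>e1 \<in> E1\<close> unfolding simple_graph_def by blast
      ultimately have "h1 u \<in> h2 ` e2" by blast
      thus False using dis by blast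
    qed
    hence "card E = card ((\<lambda>e. h1 ` e) ` E1) + card ((\<lambda>e. h2 ` e) ` E2)" unfolding E_def
      using fe1 fe2 by (simp add: card_Un_disjoint)
    moreover have "inj_on (\<lambda>e. h1 ` e) E1" using i1 by (simp add: inj_on_def inj_image_eq_iff)
    moreover have "inj_on (\<lambda>e. h2 ` e) E2" using i2 by (simp add: inj_on_def inj_image_eq_iff)
    ultimately show ?thesis by (simp add: card_image)
  qed
  obtain S where S: "k_independent k V E S" "card S = alpha_k k V E" using alpha_obtain[OF fV] by blast
  define S1 where "S1 = {v\<in>V1. h1 v \<in> S}"
  define S2 where "S2 = {v\<in>V2. h2 v \<in> S}"
  have k1: "k_independent k V1 E1 S1" unfolding S1_def
    by (rule restrict[OF S(1) fV]) (use i1 in \<open>auto simp: E_def inj_on_subset[of _ UNIV]\<close>)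
  have k2: "k_independent k V2 E2 S2" unfolding S2_def
    by (rule restrict[OF S(1) fV]) (use i2 in \<open>auto simp: E_def inj_on_subset[of _ UNIV]\<close>)
  have Seq: "S = h1 ` S1 \<union> h2 ` S2"
    using S(1) unfolding k_independent_def S1_def S2_def V_def by blast
  have fS1: "finite S1" and fS2: "finite S2" unfolding S1_def S2_def using f1 f2 by auto
  have "h1 ` S1 \<inter> h2 ` S2 = {}" using dis by blast
  hence "card S = card (h1 ` S1) + card (h2 ` S2)" using Seq fS1 fS2 by (simp add: card_Un_disjoint)
  also have "\<dots> = card S1 + card S2" using i1 i2 by (simp add: card_image inj_on_subset[of _ UNIV])
  also have "\<dots> \<le> alpha_k k V1 E1 + alpha_k k V2 E2"
    using alpha_ge[OF f1 k1] alpha_ge[OF f2 k2] by simp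
  finally show ?thesis using sg cV cE S(2) by metis
qed

lemma copies:
  assumes g: "simple_graph V E"
  shows "\<exists>V' E'. simple_graph V' E' \<and> card V' = m * card V \<and> card E' = m * card E
     \<and> alpha_k k V' E' \<le> m * alpha_k k V E"
proof (induction m)
  case 0
  have "simple_graph {} {}" unfolding simple_graph_def by simp
  moreover have "alpha_k k {} {} \<le> 0" using alpha_le_card[of "{}" k "{}"] by simp
  ultimately show ?case by force
next
  case (Suc m)
  then obtain V' E' where h: "simple_graph V' E'" "card V' = m * card V" "card E' = m * card E"
     "alpha_k k V' E' \<le> m * alpha_k k V E" by blast
  from union_graph[OF h(1) g, of k] obtain V'' E'' where
    "simple_graph V'' E''" "card V'' = card V' + card V" "card E'' = card E' + card E"
    "alpha_k k V'' E'' \<le> alpha_k k V' E' + alpha_k k V E" by blast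
  thus ?case using h by (intro exI[of _ V''] exI[of _ E'']) auto
qed



definition RS :: "nat \<Rightarrow> nat \<Rightarrow> real set" where
  "RS k d = {real (alpha_k k V E) / real (card V) | V E.
                  simple_graph V E \<and> V \<noteq> {} \<and> avg_degree V E \<le> real d}"

lemma f_RS: "f k d = Inf (RS k d)" unfolding f_def RS_def by simp

lemma RS_bdd: "bdd_below (RS k d)"
  unfolding RS_def by (rule bdd_belowI[of _ 0]) auto

lemma RS_ne: "RS k d \<noteq> {}"
proof -
  have "simple_graph {0} {}" unfolding simple_graph_def by simp
  moreover have "avg_degree {0} {} \<le> real d" unfolding avg_degree_def by simp
  ultimately show ?thesis unfolding RS_def by blast
qed

lemma key:
  assumes td: "t \<le> d" and r1: "r1 \<in> RS k (d - t)" and r2: "r2 \<in> RS k (d + t)"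
  shows "2 * f k d \<le> r1 + r2"
proof -
  obtain V1 E1 where G1: "r1 = real (alpha_k k V1 E1) / real (card V1)" "simple_graph V1 E1"
    "V1 \<noteq> {}" "avg_degree V1 E1 \<le> real (d - t)" using r1 unfolding RS_def by blast
  obtain V2 E2 where G2: "r2 = real (alpha_k k V2 E2) / real (card V2)" "simple_graph V2 E2"
    "V2 \<noteq> {}" "avg_degree V2 E2 \<le> real (d + t)" using r2 unfolding RS_def by blast
  define n1 where "n1 = card V1"
  define n2 where "n2 = card V2"
  define a1 where "a1 = alpha_k k V1 E1"
  define a2 where "a2 = alpha_k k V2 E2"
  define e1 where "e1 = card E1"
  define e2 where "e2 = card E2"
  have n1p: "n1 > 0" using G1 unfolding n1_def simple_graph_def by (simp add: card_gt_0_iff)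
  have n2p: "n2 > 0" using G2 unfolding n2_def simple_graph_def by (simp add: card_gt_0_iff)
  obtain Va Ea where A: "simple_graph Va Ea" "card Va = n2 * n1" "card Ea = n2 * e1"
    "alpha_k k Va Ea \<le> n2 * a1" using copies[OF G1(2), of n2 k] unfolding n1_def e1_def a1_def by blast
  obtain Vb Eb where B: "simple_graph Vb Eb" "card Vb = n1 * n2" "card Eb = n1 * e2"
    "alpha_k k Vb Eb \<le> n1 * a2" using copies[OF G2(2), of n1 k] unfolding n2_def e2_def a2_def by blast
  obtain V E where C: "simple_graph V E" "card V = card Va + card Vb" "card E = card Ea + card Eb"
    "alpha_k k V E \<le> alpha_k k Va Ea + alpha_k k Vb Eb" using union_graph[OF A(1) B(1), of k] by blast
  have cV: "real (card V) = 2 * real n1 * real n2" using C(2) A(2) B(2) by simp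
  have cE: "real (card E) = real n2 * e1 + real n1 * e2" using C(3) A(3) B(3) by simp
  have al: "real (alpha_k k V E) \<le> real n2 * a1 + real n1 * a2"
  proof -
    have "alpha_k k V E \<le> n2 * a1 + n1 * a2" using C(4) A(4) B(4) by linarith
    hence "real (alpha_k k V E) \<le> real (n2 * a1 + n1 * a2)" by (simp only: of_nat_le_iff)
    thus ?thesis by simp
  qed
  have pos: "real n1 > 0" "real n2 > 0" using n1p n2p by auto
  have d1: "2 * real e1 \<le> (real d - real t) * real n1"
    using G1(4) td pos unfolding avg_degree_def e1_def n1_def by (simp add: pos_divide_le_eq of_nat_diff)
  have d2: "2 * real e2 \<le> (real d + real t) * real n2"
    using G2(4) pos unfolding avg_degree_def e2_def n2_def by (simp add: pos_divide_le_eq)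
  have Vne: "V \<noteq> {}" using cV pos by auto
  have avg: "avg_degree V E \<le> real d"
  proof -
    have "2 * (real n2 * e1 + real n1 * e2) \<le> real d * (2 * real n1 * real n2)"
    proof -
      have "2 * (real n2 * e1) \<le> real n2 * ((real d - real t) * real n1)"
        using mult_left_mono[OF d1, of "real n2"] pos by (simp add: algebra_simps)
      moreover have "2 * (real n1 * e2) \<le> real n1 * ((real d + real t) * real n2)"
        using mult_left_mono[OF d2, of "real n1"] pos by (simp add: algebra_simps)
      ultimately show ?thesis by (simp add: algebra_simps)
    qed
    moreover have "2 * real n1 * real n2 > 0" using pos by simp
    ultimately show ?thesis unfolding avg_degree_def cV cE by (simp add: pos_divide_le_eq)
  qed
  have "real (alpha_k k V E) / real (card V) \<in> RS k d"
    unfolding RS_def using C(1) Vne avg by blast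
  hence "f k d \<le> real (alpha_k k V E) / real (card V)"
    unfolding f_RS by (rule cInf_lower[OF _ RS_bdd])
  also have "\<dots> \<le> (real n2 * a1 + real n1 * a2) / (2 * real n1 * real n2)"
    unfolding cV using al pos by (simp add: divide_right_mono)
  also have "\<dots> = (r1 + r2) / 2"
    unfolding G1(1) G2(1) using pos by (simp add: n1_def[symmetric] n2_def[symmetric] a1_def[symmetric] a2_def[symmetric] field_simps)
  finally show ?thesis by simp
qed

theorem mainTheorem3:
  fixes d k t :: nat
  assumes "t \<le> d"
  shows "2 * f k d \<le> f k (d - t) + f k (d + t)"
proof -
  have "2 * f k d - f k (d + t) \<le> f k (d - t)"
    unfolding f_RS[of k "d - t"]
  proof (rule cInf_greatest[OF RS_ne])
    fix r1 assume r1: "r1 \<in> RS k (d - t)"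
    have "2 * f k d - r1 \<le> f k (d + t)"
      unfolding f_RS[of k "d + t"]
    proof (rule cInf_greatest[OF RS_ne])
      fix r2 assume "r2 \<in> RS k (d + t)"
      from key[OF assms r1 this] show "2 * f k d - r1 \<le> r2" by linarith
    qed
    thus "2 * f k d - f k (d + t) \<le> r1" by simp
  qed
  thus ?thesis by simp
qed

end
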